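(* Let $\mathcal{H}$ be a finite-dimensional Hilbert space, let $\mathcal{B}_0$ be a fixed reference observable (Hermitian operator) on $\mathcal{H}$, and let $\mathcal{A}_0$ be an observable on $\mathcal{H}$ that evolves in the Heisenberg picture according to $\frac{d\mathcal{A}_t}{dt}=\mathcal{L}_t^{\dagger}(\mathcal{A}_t)$, where $\mathcal{L}_t^{\dagger}$ is the adjoint of the Liouvillian super-operator, with $\mathcal{A}_t$ differentiable in $t$. Then for every $T>0$, $$T\ \geq\ T_Q=\frac{\sqrt{Q(\mathcal{B}_0,\mathcal{A}_0)}-\sqrt{Q(\mathcal{B}_0,\mathcal{A}_T)}}{2\,\langle\!\langle \lVert[\mathcal{B}_0,\mathcal{L}_t^{\dagger}(\mathcal{A}_t)]\rVert_{\rm HS}\rangle\!\rangle_T}$$ (whenever the time average in the denominator is nonzero).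
   Context: For operators $X,Y$ on $\mathcal{H}$, the quantumness is $Q(X,Y)=2\lVert[X,Y]\rVert_{\rm HS}^2$, where $[X,Y]=XY-YX$ and $\lVert O\rVert_{\rm HS}=\sqrt{\operatorname{tr}(O^{\dagger}O)}$ is the Hilbert–Schmidt norm. The Liouvillian $\mathcal{L}_t$ generates the Schrödinger-picture dynamics $\dot\rho_t=\mathcal{L}_t(\rho_t)$, and its adjoint $\mathcal{L}_t^\dagger$ is defined by $\operatorname{tr}(\mathcal{A}\,\mathcal{L}_t(\rho))=\operatorname{tr}(\mathcal{L}_t^\dagger(\mathcal{A})\rho)$. For a function $X_t$, $\langle\!\langle X_t\rangle\!\rangle_T=\frac{1}{T}\int_0^T X_t\,dt$. *)

theory Defs
  imports "HOL-Analysis.Analysis"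
begin

type_synonym 'n op = "complex^'n^'n"

definition adj :: "'n::finite op \<Rightarrow> 'n op" where
  "adj X = (\<chi> i j. cnj (X $ j $ i))"

definition hermitian :: "'n::finite op \<Rightarrow> bool" where
  "hermitian X \<longleftrightarrow> adj X = X"

definition commutator :: "'n::finite op \<Rightarrow> 'n op \<Rightarrow> 'n op" where
  "commutator X Y = X ** Y - Y ** X"

text \<open>Hilbert-Schmidt norm sqrt(tr(O^dagger O)); the trace is real and nonnegative.\<close>
definition hs_norm :: "'n::finite op \<Rightarrow> real" where
  "hs_norm M = sqrt (Re (trace (adj M ** M)))"

definition quantumness :: "'n::finite op \<Rightarrow> 'n op \<Rightarrow> real" where
  "quantumness X Y = 2 * (hs_norm (commutator X Y))\<^sup>2"

definition time_avg :: "(real \<Rightarrow> real) \<Rightarrow> real \<Rightarrow> real" where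
  "time_avg X T = (1 / T) * integral {0..T} X"

end

theory Submission
  imports Defs
begin

lemma mm_scaleR_right: "(B::'n::finite op) ** (r *\<^sub>R X) = r *\<^sub>R (B ** X)"
  by (simp add: vec_eq_iff matrix_matrix_mult_def scaleR_sum_right)

lemma mm_scaleR_left: "(r *\<^sub>R X) ** (B::'n::finite op) = r *\<^sub>R (X ** B)"
  by (simp add: vec_eq_iff matrix_matrix_mult_def scaleR_sum_right)

lemma mm_add_right: "((X::'n::finite op) + Y) ** B = X ** B + Y ** B"
  by (simp add: vec_eq_iff matrix_matrix_mult_def sum.distrib distrib_right)

lemma comm_linear: "linear (commutator (B::'n::finite op))"
proof (rule linearI)
  fix X Y :: "'n op" and r :: real
  show "commutator B (X + Y) = commutator B X + commutator B Y"
    by (simp add: commutator_def matrix_add_ldistrib mm_add_right algebra_simps)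
  show "commutator B (r *\<^sub>R X) = r *\<^sub>R commutator B X"
    by (simp add: commutator_def mm_scaleR_right mm_scaleR_left algebra_simps)
qed

lemma comm_bl: "bounded_linear (commutator (B::'n::finite op))"
  using comm_linear linear_conv_bounded_linear by blast

lemma hs_norm_eq: "hs_norm (M::'n::finite op) = norm M"
proof -
  have "trace (adj M ** M) = (\<Sum>i\<in>UNIV. \<Sum>k\<in>UNIV. M$k$i * cnj (M$k$i))"
    by (simp add: trace_def adj_def matrix_matrix_mult_def mult.commute)
  hence "Re (trace (adj M ** M)) = (\<Sum>i\<in>UNIV. \<Sum>k\<in>UNIV. Re (M$k$i * cnj (M$k$i)))"
    by simp
  also have "\<dots> = (\<Sum>i\<in>UNIV. \<Sum>k\<in>UNIV. (cmod (M$k$i))\<^sup>2)"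
    by (simp add: complex_mult_cnj cmod_def)
  also have "\<dots> = (\<Sum>k\<in>UNIV. \<Sum>i\<in>UNIV. (cmod (M$k$i))\<^sup>2)"
    by (rule sum.swap)
  also have "\<dots> = (\<Sum>k\<in>UNIV. (norm (M$k))\<^sup>2)"
    by (simp add: norm_vec_def L2_set_def sum_nonneg)
  finally show ?thesis
    by (simp add: hs_norm_def norm_vec_def L2_set_def)
qed

theorem corollary1:
  fixes L Ldag :: "real \<Rightarrow> 'n::finite op \<Rightarrow> 'n op"
    and A :: "real \<Rightarrow> 'n op" and B0 :: "'n op" and T :: real
  assumes adjoint: "\<And>t X \<rho>. trace (X ** L t \<rho>) = trace (Ldag t X ** \<rho>)"
    and herm_B: "hermitian B0"
    and herm_A: "hermitian (A 0)"
    and heis: "\<And>t. t \<in> {0..T} \<Longrightarrow> (A has_vector_derivative Ldag t (A t)) (at t within {0..T})"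
    and T_pos: "T > 0"
    and avg_nz: "time_avg (\<lambda>t. hs_norm (commutator B0 (Ldag t (A t)))) T \<noteq> 0"
  shows "T \<ge> (sqrt (quantumness B0 (A 0)) - sqrt (quantumness B0 (A T)))
              / (2 * time_avg (\<lambda>t. hs_norm (commutator B0 (Ldag t (A t)))) T)"
proof -
  define C where "C t = commutator B0 (A t)" for t
  define g where "g t = hs_norm (commutator B0 (Ldag t (A t)))" for t
  have bl: "bounded_linear (commutator B0)" by (rule comm_bl)
  have dC: "(C has_vector_derivative commutator B0 (Ldag t (A t))) (at t within {0..T})"
    if "t \<in> {0..T}" for t
  proof -
    have "((\<lambda>s. commutator B0 (A s)) has_derivative (\<lambda>x. commutator B0 (x *\<^sub>R Ldag t (A t)))) (at t within {0..T})"
      using bounded_linear.has_derivative[OF bl heis[OF that, unfolded has_vector_derivative_def]] .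
    moreover have "(\<lambda>x. commutator B0 (x *\<^sub>R Ldag t (A t))) = (\<lambda>x. x *\<^sub>R commutator B0 (Ldag t (A t)))"
      using linear_scale[OF comm_linear] by auto
    ultimately show ?thesis
      unfolding has_vector_derivative_def C_def by simp
  qed
  have ftc: "((\<lambda>t. commutator B0 (Ldag t (A t))) has_integral (C T - C 0)) {0..T}"
    using fundamental_theorem_of_calculus[of 0 T C] dC T_pos by auto
  have ig: "integral {0..T} g \<noteq> 0"
    using avg_nz by (simp add: time_avg_def g_def[abs_def])
  hence gint: "g integrable_on {0..T}"
    using not_integrable_integral by blast
  have gnn: "integral {0..T} g \<ge> 0"
    by (rule integral_nonneg[OF gint]) (simp add: g_def hs_norm_eq)
  have "norm (C T - C 0) \<le> integral {0..T} g"
    using integral_norm_bound_integral[of "\<lambda>t. commutator B0 (Ldag t (A t))" "{0..T}" g] ftc gint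
    by (simp add: g_def hs_norm_eq has_integral_integrable_integral)
  hence key: "norm (C 0) - norm (C T) \<le> integral {0..T} g"
    using norm_triangle_ineq3[of "C T" "C 0"] by (simp add: norm_minus_commute)
  have sq: "sqrt (quantumness B0 (A t)) = sqrt 2 * norm (C t)" for t
    by (simp add: quantumness_def C_def hs_norm_eq real_sqrt_mult)
  have s2: "sqrt 2 \<le> (2::real)"
    using real_sqrt_le_mono[of 2 4] by simp
  have num: "sqrt (quantumness B0 (A 0)) - sqrt (quantumness B0 (A T)) \<le> 2 * integral {0..T} g"
  proof -
    have "sqrt (quantumness B0 (A 0)) - sqrt (quantumness B0 (A T)) = sqrt 2 * (norm (C 0) - norm (C T))"
      by (simp add: sq algebra_simps)
    also have "\<dots> \<le> sqrt 2 * integral {0..T} g"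
      using key by (simp add: mult_left_mono)
    also have "\<dots> \<le> 2 * integral {0..T} g"
      using s2 gnn by (simp add: mult_right_mono)
    finally show ?thesis .
  qed
  have avg: "time_avg g T = integral {0..T} g / T"
    by (simp add: time_avg_def)
  have ipos: "integral {0..T} g > 0" using gnn ig by simp
  have "(sqrt (quantumness B0 (A 0)) - sqrt (quantumness B0 (A T))) / (2 * (integral {0..T} g / T)) \<le> T"
  proof -
    let ?X = "sqrt (quantumness B0 (A 0)) - sqrt (quantumness B0 (A T))"
    let ?I = "integral {0..T} g"
    have "?X / (2 * (?I / T)) = T * (?X / (2 * ?I))"
      using ipos T_pos by (simp add: field_simps)
    also have "\<dots> \<le> T * 1"
      using num ipos T_pos by (intro mult_left_mono) (simp_all add: divide_le_eq)
    finally show ?thesis by simp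
  qed
  moreover have "(\<lambda>t. hs_norm (commutator B0 (Ldag t (A t)))) = g" by (simp add: g_def[abs_def])
  ultimately show ?thesis using avg by simp
qed

end
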